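(* For every integer $n\geq 3$, every number $p\in(0,\infty)$, and every function $f\colon V\to\mathbb{R}$ defined on the vertex set $V$ of the complete graph $K_n$, we have \[ \mathrm{Var}_p\, M_{K_n} f \leq \Bigl(1-\frac{1}{n}\Bigr)\mathrm{Var}_p f. \] Equivalently, $\mathbf{C}_{K_n,p}\le 1-\frac1n$ (and in fact $\mathbf{C}_{K_n,p}=1-\frac1n$).
   Context: Let $G=(V,E)$ be a finite connected undirected graph, with graph distance $d_G(v,w)$ equal to the number of edges in a shortest path from $v$ to $w$. The ball is $\mathrm{B}_G(v,r)=\{w\in V: d_G(v,w)\le r\}$. The (centered) Hardy–Littlewood maximal operator on $G$ is \[ (M_G f)(v)=\max_{r\ge 0}\frac{1}{|\mathrm{B}_G(v,r)|}\sum_{w\in \mathrm{B}_G(v,r)}|f(w)|,\quad v\in V. \] For $p\in(0,\infty)$, the $p$-variation of $f\colon V\to\mathbb{R}$ is $\mathrm{Var}_p f=\bigl(\sum_{vw\in E}|f(v)-f(w)|^p\bigr)^{1/p}$ (sum over edges, each edge counted once). $\mathbf{C}_{G,p}$ is the smallest number in $[0,\infty]$ such that $\mathrm{Var}_p M_G f\le \mathbf{C}_{G,p}\mathrm{Var}_p f$ for all $f\colon V\to\mathbb{R}$. $K_n$ is the complete graph on $n$ vertices (every pair of distinct vertices joined by an edge). *)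

theory Defs
  imports "HOL-Analysis.Analysis"
begin

text \<open>A finite simple graph is given by a vertex set V and a symmetric irreflexive
  adjacency relation E (only its restriction to V matters).\<close>

definition adj :: "'a set \<Rightarrow> ('a \<Rightarrow> 'a \<Rightarrow> bool) \<Rightarrow> 'a \<Rightarrow> 'a \<Rightarrow> bool" where
  "adj V E v w \<longleftrightarrow> v \<in> V \<and> w \<in> V \<and> E v w"

definition graph_dist :: "'a set \<Rightarrow> ('a \<Rightarrow> 'a \<Rightarrow> bool) \<Rightarrow> 'a \<Rightarrow> 'a \<Rightarrow> nat" where
  "graph_dist V E v w = (LEAST k. (adj V E ^^ k) v w)"

definition ball_G :: "'a set \<Rightarrow> ('a \<Rightarrow> 'a \<Rightarrow> bool) \<Rightarrow> 'a \<Rightarrow> nat \<Rightarrow> 'a set" where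
  "ball_G V E v r = {w \<in> V. graph_dist V E v w \<le> r}"

definition maxop :: "'a set \<Rightarrow> ('a \<Rightarrow> 'a \<Rightarrow> bool) \<Rightarrow> ('a \<Rightarrow> real) \<Rightarrow> 'a \<Rightarrow> real" where
  "maxop V E f v = (SUP r\<in>(UNIV::nat set).
      (\<Sum>w\<in>ball_G V E v r. \<bar>f w\<bar>) / real (card (ball_G V E v r)))"

text \<open>p-variation: sum over edges, each edge counted once (= half of the sum over
  ordered adjacent pairs).\<close>
definition var_p :: "'a set \<Rightarrow> ('a \<Rightarrow> 'a \<Rightarrow> bool) \<Rightarrow> real \<Rightarrow> ('a \<Rightarrow> real) \<Rightarrow> real" where
  "var_p V E p f = ((\<Sum>(v,w)\<in>{(v,w). adj V E v w}. \<bar>f v - f w\<bar> powr p) / 2) powr (1/p)"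

definition K_V :: "nat \<Rightarrow> nat set" where "K_V n = {0..<n}"
definition K_E :: "nat \<Rightarrow> nat \<Rightarrow> bool" where "K_E v w \<longleftrightarrow> v \<noteq> w"

end

theory Submission
  imports Defs
begin


lemma I2: fixes b p :: real assumes "0 \<le> b" "0 \<le> p" "p \<le> 1"
  shows "b powr p \<le> 1 - p + p*b"
proof (cases "b = 0")
  case True thus ?thesis using assms by simp
next
  case False
  have "b powr p * 1 powr (1-p) \<le> p*b + (1-p)*1"
    by (rule Youngs_inequality_0) (use assms False in auto)
  thus ?thesis by simp
qed

lemma I1: fixes b p :: real assumes "0 < b" shows "1 + p * ln b \<le> b powr p"
  using assms exp_ge_add_one_self[of "p * ln b"] by (simp add: powr_def)

lemma bern: fixes b p :: real assumes "0 \<le> b" "1 \<le> p"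
  shows "1 + p*(b-1) \<le> b powr p"
proof -
  have "(b powr p) powr (1/p) \<le> 1 - 1/p + (1/p) * b powr p"
    by (rule I2) (use assms in auto)
  moreover have "(b powr p) powr (1/p) = b" using assms by (simp add: powr_powr)
  ultimately have "b \<le> 1 - 1/p + (1/p) * b powr p" by simp
  hence "p*b \<le> p*(1 - 1/p + (1/p) * b powr p)" using assms by (simp add: mult_left_mono)
  also have "\<dots> = p - 1 + b powr p" using assms by (simp add: algebra_simps)
  finally show ?thesis by (simp add: algebra_simps)
qed

lemma conc: fixes u v t p :: real assumes "0 < u" "0 < v" "0 \<le> t" "t \<le> 1" "0 \<le> p" "p \<le> 1"
  shows "(1-t) * u powr p + t * v powr p \<le> ((1-t) * u + t * v) powr p"
proof -
  define M where "M = (1-t) * u + t * v"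
  have M: "M > 0"
  proof (cases "t = 0")
    case True thus ?thesis using assms unfolding M_def by simp
  next
    case False
    have "0 \<le> (1-t) * u" using assms by simp
    moreover have "0 < t * v" using assms False by simp
    ultimately show ?thesis unfolding M_def by linarith
  qed
  have hu: "(u/M) powr p \<le> 1 - p + p*(u/M)" by (rule I2) (use assms M in auto)
  have hv: "(v/M) powr p \<le> 1 - p + p*(v/M)" by (rule I2) (use assms M in auto)
  have "(1-t) * (u/M) powr p + t * (v/M) powr p \<le> (1-t)*(1 - p + p*(u/M)) + t*(1 - p + p*(v/M))"
    using hu hv assms by (intro add_mono mult_left_mono) auto
  also have "\<dots> = 1 - p + p * (((1-t) * u + t * v)/M)" using M by (simp add: field_simps)
  also have "\<dots> = 1" using M unfolding M_def by simp
  finally have "(1-t) * (u powr p / M powr p) + t * (v powr p / M powr p) \<le> 1"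
    using assms M by (simp add: powr_divide)
  hence "((1-t) * u powr p + t * v powr p) / M powr p \<le> 1" by (simp add: add_divide_distrib)
  thus ?thesis using M unfolding M_def[symmetric] by (simp add: divide_le_eq)
qed

lemma subadd: fixes d a b p :: real assumes "0 < d" "0 \<le> a" "0 \<le> b" "0 \<le> p" "p \<le> 1"
  shows "(d+a+b) powr p + d powr p \<le> (d+a) powr p + (d+b) powr p"
proof (cases "a + b = 0")
  case True
  from True have "a = 0" "b = 0" using assms by auto
  thus ?thesis by simp
next
  case False
  define z where "z = a + b"
  have z: "z > 0" using False assms unfolding z_def by simp
  define t where "t = a / z"
  have t: "0 \<le> t" "t \<le> 1" using assms z unfolding t_def z_def by auto
  have tz: "t * z = a" using z unfolding t_def by simp
  have e1: "d + a = (1-t)*d + t*(d+z)" using tz by (simp add: algebra_simps)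
  have e2: "d + b = t*d + (1-t)*(d+z)" using tz unfolding z_def by (simp add: algebra_simps)
  have "(1-t) * d powr p + t * (d+z) powr p \<le> (d+a) powr p"
    unfolding e1 by (rule conc) (use assms z t in auto)
  moreover have "(1-(1-t)) * d powr p + (1-t) * (d+z) powr p \<le> (d+b) powr p"
    unfolding e2 using conc[of d "d+z" "1-t" p] assms z t by auto
  ultimately show ?thesis unfolding z_def by (simp add: algebra_simps)
qed

lemma vertex: fixes d p :: real and e :: "'a \<Rightarrow> real"
  assumes "finite T" "T \<noteq> {}" "0 < d" "\<forall>w\<in>T. 0 \<le> e w" "0 \<le> p" "p \<le> 1"
  shows "(real (card T) - 1) * d powr p + (d + sum e T) powr p \<le> (\<Sum>w\<in>T. (d + e w) powr p)"
  using assms(1,2,4)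
proof (induction T rule: finite_ne_induct)
  case (singleton x) thus ?case by simp
next
  case (insert x F)
  have IH: "(real (card F) - 1) * d powr p + (d + sum e F) powr p \<le> (\<Sum>w\<in>F. (d + e w) powr p)"
    using insert by auto
  have s: "(d + e x + sum e F) powr p + d powr p \<le> (d + e x) powr p + (d + sum e F) powr p"
    by (rule subadd) (use assms insert in \<open>auto intro: sum_nonneg\<close>)
  show ?case using IH s insert by (simp add: algebra_simps)
qed

lemma lam_bound: fixes n :: real assumes "n \<ge> 2"
  shows "(n-1) * ln (n/(n-1)) \<le> 1" "0 \<le> ln (n/(n-1))"
proof -
  have "n/(n-1) = 1 + 1/(n-1)" using assms by (simp add: field_simps)
  hence "ln (n/(n-1)) \<le> 1/(n-1)" using ln_add_one_self_le_self[of "1/(n-1)"] assms by simp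
  thus "(n-1) * ln (n/(n-1)) \<le> 1" using assms by (simp add: field_simps)
  show "0 \<le> ln (n/(n-1))" using assms by simp
qed

lemma cpow_lower: fixes n p :: real assumes "n \<ge> 2"
  shows "1 - p * ln (n/(n-1)) \<le> (1 - 1/n) powr p"
proof -
  have c: "1 - 1/n = (n-1)/n" "0 < (n-1)/n" using assms by (auto simp: field_simps)
  have "ln ((n-1)/n) = - ln (n/(n-1))" using assms by (simp add: ln_div)
  thus ?thesis using I1[of "(n-1)/n" p] c by simp
qed

lemma one_le_ln3: "1 \<le> ln (3::real)"
  using exp_le by (subst ln_ge_iff) auto

lemma x_le_ln: fixes x :: real assumes "0 \<le> x" "x \<le> 1" shows "x \<le> ln (1 + 2*x)"
proof -
  have "exp 1 powr x \<le> 1 - x + x * exp 1" by (rule I2) (use assms in auto)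
  also have "\<dots> \<le> 1 + 2*x" using mult_left_mono[OF exp_le, of x] assms by simp
  finally have "exp x \<le> 1 + 2*x" by (simp add: powr_def)
  thus ?thesis using assms by (subst ln_ge_iff) auto
qed

lemma scalarA: fixes k m p :: real assumes "k \<ge> 1" "m \<ge> 1" "k + m \<ge> 3" "0 < p" "p \<le> 1"
  defines "c \<equiv> 1 - 1/(k+m)"
  shows "m + (1 - c powr p) * (k-1) \<le> c powr p * (m-1) + (3*c) powr p"
proof -
  define n where "n = k + m"
  define l where "l = ln (n/(n-1))"
  have n2: "n \<ge> 2" using assms unfolding n_def by simp
  have l1: "(n-1) * l \<le> 1" "0 \<le> l" using lam_bound[OF n2] unfolding l_def by auto
  have cp: "1 - p * l \<le> c powr p" using cpow_lower[OF n2, of p] unfolding c_def n_def l_def by simp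
  have cpos: "0 < c" unfolding c_def using assms by (simp add: field_simps)
  have lnc: "ln c = - l" unfolding c_def l_def n_def[symmetric] using n2
    by (simp add: ln_div field_simps)
  have "1 + p * ln (3*c) \<le> (3*c) powr p" by (rule I1) (use cpos in simp)
  moreover have "ln (3*c) = ln 3 + ln c" using cpos by (simp add: ln_mult)
  moreover have "p * 1 \<le> p * ln 3" using one_le_ln3 assms by (intro mult_left_mono) auto
  moreover have "p * ln (3*c) = p * ln 3 - p * l" using cpos lnc by (simp add: ln_mult algebra_simps)
  ultimately have t3: "1 + p * (1 - l) \<le> (3*c) powr p"
    by (simp add: algebra_simps)
  have u: "1 - c powr p \<le> p * l" using cp by simp
  have "(1 - c powr p) * (k-1) \<le> p * l * (k-1)" using u assms by (intro mult_right_mono) auto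
  moreover have "(1 - p*l) * (m-1) \<le> c powr p * (m-1)" using cp assms by (intro mult_right_mono) auto
  moreover have "p * ((k - 1 + m) * l) \<le> p * 1" using l1 assms unfolding n_def
    by (intro mult_left_mono) (auto simp: algebra_simps)
  ultimately show ?thesis using t3 by (simp add: algebra_simps)
qed

lemma powr_le_one_base: fixes x p :: real assumes "0 \<le> x" "x \<le> 1" "0 \<le> p" shows "x powr p \<le> 1"
  using powr_mono2[of p x 1] assms by simp

lemma scalarQ: fixes k m p x :: real assumes "k \<ge> 2" "m \<ge> 1" "0 < p" "p \<le> 1" "0 < x" "x \<le> 1"
  defines "c \<equiv> 1 - 1/(k+m)"
  shows "m * x powr p + (1 - c powr p) + (1 - c powr p) * (k-2) * x powr p
     \<le> c powr p * (m-1) * x powr p + (c*(1+2*x)) powr p"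
proof -
  define n where "n = k + m"
  define l where "l = ln (n/(n-1))"
  define u where "u = 1 - c powr p"
  define X where "X = x powr p"
  have n2: "n \<ge> 2" using assms unfolding n_def by simp
  have l1: "(n-1) * l \<le> 1" "0 \<le> l" using lam_bound[OF n2] unfolding l_def by auto
  have cp: "1 - p * l \<le> c powr p" using cpow_lower[OF n2, of p] unfolding c_def n_def l_def by simp
  have cpos: "0 < c" "c \<le> 1" unfolding c_def using assms by (auto simp: field_simps)
  have u0: "0 \<le> u" unfolding u_def using powr_le_one_base[of c p] cpos assms by simp
  have u1: "u \<le> p * l" using cp unfolding u_def by simp
  have X1: "X \<le> 1" unfolding X_def using powr_le_one_base[of x p] assms by simp
  have X2: "X \<le> 1 - p + p * x" unfolding X_def by (rule I2) (use assms in auto)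
  have lnc: "ln c = - l" unfolding c_def l_def n_def[symmetric] using n2
    by (simp add: ln_div field_simps)
  have "1 + p * ln (c*(1+2*x)) \<le> (c*(1+2*x)) powr p" by (rule I1) (use cpos assms in simp)
  moreover have "ln (c*(1+2*x)) = ln (1+2*x) - l" using cpos assms lnc by (simp add: ln_mult)
  moreover have "p * x \<le> p * ln (1+2*x)" using x_le_ln[of x] assms by (intro mult_left_mono) auto
  moreover have "p * ln (c*(1+2*x)) = p * ln (1+2*x) - p * l"
    using \<open>ln (c*(1+2*x)) = ln (1+2*x) - l\<close> by (simp add: right_diff_distrib)
  ultimately have Y: "1 + p * x - p * l \<le> (c*(1+2*x)) powr p"
    by (simp add: algebra_simps right_diff_distrib)
  have e: "m * X + u + u * (k-2) * X - (1-u) * (m-1) * X = X + u + u * (n-3) * X"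
    unfolding n_def by (simp add: algebra_simps)
  have "0 \<le> u * (n-3)" using u0 assms unfolding n_def by simp
  hence "u * (n-3) * X \<le> u * (n-3)" using mult_left_mono[OF X1, of "u*(n-3)"] by simp
  moreover have "u * (n - 2) \<le> p * l * (n-2)" using u1 n2 assms unfolding n_def by (intro mult_right_mono) auto
  moreover have "p * ((n-1) * l) \<le> p * 1" using l1 assms by (intro mult_left_mono) auto
  ultimately have "X + u + u * (n-3) * X \<le> 1 + p * x - p * l" using X2
    by (simp add: algebra_simps)
  hence "m * X + u + u * (k-2) * X \<le> (1-u) * (m-1) * X + (c*(1+2*x)) powr p" using e Y by linarith
  thus ?thesis unfolding u_def X_def by simp
qed

lemma scalarP1: fixes k m p :: real assumes "k \<ge> 1" "m \<ge> 1" "1 \<le> p"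
  defines "c \<equiv> 1 - 1/(k+m)"
  shows "m + (1 - c powr p) * (k-1) \<le> m * (c * (m+1)/m) powr p"
proof -
  define n where "n = k + m"
  define r where "r = c * (m+1)/m"
  have n2: "n \<ge> 2" using assms unfolding n_def by simp
  have c0: "0 \<le> c" unfolding c_def using assms by (simp add: field_simps)
  have "1 + p * (c - 1) \<le> c powr p" by (rule bern) (use assms c0 in auto)
  hence u: "1 - c powr p \<le> p / n" unfolding c_def n_def by simp
  have r0: "0 \<le> r" unfolding r_def using c0 assms by simp
  have "1 + p * (r - 1) \<le> r powr p" by (rule bern) (use assms r0 in auto)
  moreover have "m * (r - 1) = c * (m+1) - m" unfolding r_def using \<open>m \<ge> 1\<close>
    by (simp add: field_simps)
  moreover have "c * (m+1) - m = (k-1)/n" unfolding c_def n_def using assms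
    by (simp add: field_simps)
  ultimately have "m + p * ((k-1)/n) \<le> m * r powr p"
  proof -
    assume h1: "1 + p * (r - 1) \<le> r powr p" and h2: "m * (r - 1) = c * (m+1) - m"
      and h3: "c * (m+1) - m = (k-1)/n"
    have "m * (1 + p * (r - 1)) \<le> m * r powr p" using h1 \<open>m \<ge> 1\<close> by (intro mult_left_mono) auto
    moreover have "m * (1 + p * (r - 1)) = m + p * (m * (r - 1))" by (simp add: algebra_simps)
    ultimately show ?thesis using h2 h3 by simp
  qed
  moreover have "(1 - c powr p) * (k-1) \<le> p / n * (k-1)" using u assms by (intro mult_right_mono) auto
  ultimately show ?thesis unfolding r_def by (simp add: algebra_simps)
qed

lemma jensen_row: fixes d p :: real and e :: "'a \<Rightarrow> real"
  assumes "finite T" "T \<noteq> {}" "0 < d" "\<forall>w\<in>T. 0 \<le> e w" "1 \<le> p"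
  shows "real (card T) * (d + sum e T / real (card T)) powr p \<le> (\<Sum>w\<in>T. (d + e w) powr p)"
proof -
  define m where "m = real (card T)"
  define y where "y = d + sum e T / m"
  have m0: "m > 0" unfolding m_def using assms by (simp add: card_gt_0_iff)
  have E0: "0 \<le> sum e T" using assms by (simp add: sum_nonneg)
  have y0: "y > 0" unfolding y_def using assms m0 E0 by (simp add: add_pos_nonneg)
  have h: "1 + p * ((d + e w)/y - 1) \<le> ((d + e w)/y) powr p" if "w \<in> T" for w
    by (rule bern) (use assms that y0 in auto)
  have "(\<Sum>w\<in>T. 1 + p * ((d + e w)/y - 1)) \<le> (\<Sum>w\<in>T. ((d + e w)/y) powr p)"
    using h by (rule sum_mono)
  moreover have "(\<Sum>w\<in>T. 1 + p * ((d + e w)/y - 1)) = m + p * ((m * d + sum e T)/y - m)"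
    unfolding m_def by (simp add: sum.distrib sum_distrib_left[symmetric] sum_subtractf
        sum_divide_distrib[symmetric] algebra_simps)
  moreover have "(m * d + sum e T)/y = m"
  proof -
    have "m * d + sum e T = m * y" unfolding y_def using m0 by (simp add: field_simps)
    thus ?thesis using y0 by simp
  qed
  moreover have "(\<Sum>w\<in>T. ((d + e w)/y) powr p) = (\<Sum>w\<in>T. (d + e w) powr p) / y powr p"
    by (simp add: powr_divide sum_divide_distrib assms)
  ultimately have "m \<le> (\<Sum>w\<in>T. (d + e w) powr p) / y powr p" by simp
  hence "m * y powr p \<le> (\<Sum>w\<in>T. (d + e w) powr p)" using y0 by (simp add: le_divide_eq)
  thus ?thesis unfolding m_def y_def .
qed

lemma two_pow_ge: fixes p :: real assumes "p \<le> 1" shows "p \<le> 2 powr (p-1)"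
proof -
  have "1 + (p-1) * ln 2 \<le> 2 powr (p-1)" by (rule I1) simp
  moreover have "ln (2::real) \<le> 1" using ln_le_minus_one[of 2] by simp
  moreover have "(p-1) * 1 \<le> (p-1) * ln 2" using assms \<open>ln 2 \<le> 1\<close>
    by (intro mult_left_mono_neg) auto
  ultimately show ?thesis by simp
qed

lemma rowT: fixes D p :: real and e :: "'a \<Rightarrow> real"
  assumes "finite T" "T \<noteq> {}" "0 < D" "\<forall>w\<in>T. 0 \<le> e w" "D \<le> sum e T" "sum e T \<le> 2*D"
    "0 < p" "p \<le> 1"
  shows "2 * real (card T) * (D + sum e T / real (card T)) powr p
     \<le> 2 * (\<Sum>w\<in>T. (D + e w) powr p) + (\<Sum>w\<in>T. \<Sum>x\<in>T. \<bar>e w - e x\<bar> powr p)"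
proof -
  define m where "m = real (card T)"
  define E where "E = sum e T"
  define y where "y = D + E / m"
  define Dl where "Dl = (\<Sum>w\<in>T. \<bar>e w - E/m\<bar>)"
  define K where "K = p * D powr (p-1)"
  have m0: "m > 0" unfolding m_def using assms by (simp add: card_gt_0_iff)
  have E0: "0 \<le> E" unfolding E_def using assms by (simp add: sum_nonneg)
  have eE: "e w \<le> E" if "w \<in> T" for w unfolding E_def using assms that
    by (intro member_le_sum) auto
  have s1: "y powr p - K * \<bar>e w - E/m\<bar> \<le> (D + e w) powr p" if w: "w \<in> T" for w
  proof (cases "E/m \<le> e w")
    case True
    have "y powr p \<le> (D + e w) powr p" unfolding y_def
      using True assms m0 E0 by (intro powr_mono2) (auto intro: add_nonneg_nonneg)
    moreover have "0 \<le> K * \<bar>e w - E/m\<bar>" unfolding K_def using assms by simp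
    ultimately show ?thesis by linarith
  next
    case False
    define x where "x = D + e w"
    have x0: "0 < D" "D \<le> x" "x < y" unfolding x_def y_def using assms w False by auto
    have "(y/x) powr p \<le> 1 - p + p*(y/x)" by (rule I2) (use x0 assms in auto)
    hence "(y/x) powr p * x powr p \<le> (1 - p + p*(y/x)) * x powr p" by (rule mult_right_mono) simp
    hence "y powr p \<le> x powr p + p * (x powr p / x) * (y - x)"
      using x0 by (simp add: powr_divide field_simps)
    moreover have "x powr p / x = x powr (p-1)" using x0 by (simp add: powr_diff)
    moreover have "x powr (p-1) \<le> D powr (p-1)" using x0 assms by (intro powr_mono2') auto
    moreover have "y - x = \<bar>e w - E/m\<bar>" unfolding x_def y_def using False by simp
    ultimately have "y powr p \<le> x powr p + p * x powr (p-1) * \<bar>e w - E/m\<bar>"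
      and "x powr (p-1) \<le> D powr (p-1)" by auto
    moreover have "p * x powr (p-1) * \<bar>e w - E/m\<bar> \<le> p * D powr (p-1) * \<bar>e w - E/m\<bar>"
      using \<open>x powr (p-1) \<le> D powr (p-1)\<close> assms by (intro mult_right_mono mult_left_mono) auto
    ultimately have "y powr p \<le> x powr p + p * D powr (p-1) * \<bar>e w - E/m\<bar>" by linarith
    thus ?thesis unfolding K_def x_def by simp
  qed
  have s2: "m * y powr p - K * Dl \<le> (\<Sum>w\<in>T. (D + e w) powr p)"
  proof -
    have "(\<Sum>w\<in>T. y powr p - K * \<bar>e w - E/m\<bar>) \<le> (\<Sum>w\<in>T. (D + e w) powr p)"
      using s1 by (rule sum_mono)
    thus ?thesis unfolding Dl_def m_def by (simp add: sum_subtractf sum_distrib_left)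
  qed
  define B where "B = (2*D) powr (p-1)"
  have s3: "B * \<bar>e w - e x\<bar> \<le> \<bar>e w - e x\<bar> powr p" if "w \<in> T" "x \<in> T" for w x
  proof (cases "e w = e x")
    case True thus ?thesis by simp
  next
    case False
    define t where "t = \<bar>e w - e x\<bar>"
    have "0 \<le> e w" "0 \<le> e x" using assms(4) that by auto
    hence t0: "0 < t" "t \<le> 2*D" unfolding t_def using False eE[OF that(1)] eE[OF that(2)] assms(6)
      unfolding E_def by auto
    have "t powr p = t * t powr (p-1)" using t0 powr_add[of t 1 "p-1"] by simp
    moreover have "B \<le> t powr (p-1)" unfolding B_def using t0 assms by (intro powr_mono2') auto
    ultimately have "B * t \<le> t powr p" using t0 by (simp add: mult_left_mono mult.commute)
    thus ?thesis unfolding t_def by simp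
  qed
  have s4: "m * \<bar>e w - E/m\<bar> \<le> (\<Sum>x\<in>T. \<bar>e w - e x\<bar>)" if "w \<in> T" for w
  proof -
    have "\<bar>\<Sum>x\<in>T. e w - e x\<bar> \<le> (\<Sum>x\<in>T. \<bar>e w - e x\<bar>)" by (rule sum_abs)
    moreover have "(\<Sum>x\<in>T. e w - e x) = m * e w - E" unfolding m_def E_def by (simp add: sum_subtractf)
    moreover have "m * \<bar>e w - E/m\<bar> = \<bar>m * e w - E\<bar>"
    proof -
      have "m * \<bar>e w - E/m\<bar> = \<bar>m * (e w - E/m)\<bar>" using m0 by (simp add: abs_mult)
      also have "m * (e w - E/m) = m * e w - E" using m0 by (simp add: right_diff_distrib)
      finally show ?thesis .
    qed
    ultimately show ?thesis by simp
  qed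
  have B0: "0 \<le> B" unfolding B_def by simp
  have s5: "B * m * Dl \<le> (\<Sum>w\<in>T. \<Sum>x\<in>T. \<bar>e w - e x\<bar> powr p)"
  proof -
    have "B * m * Dl = (\<Sum>w\<in>T. B * (m * \<bar>e w - E/m\<bar>))" unfolding Dl_def
      by (simp add: sum_distrib_left algebra_simps)
    also have "\<dots> \<le> (\<Sum>w\<in>T. B * (\<Sum>x\<in>T. \<bar>e w - e x\<bar>))"
      using s4 B0 by (intro sum_mono mult_left_mono) auto
    also have "\<dots> = (\<Sum>w\<in>T. \<Sum>x\<in>T. B * \<bar>e w - e x\<bar>)" by (simp add: sum_distrib_left)
    also have "\<dots> \<le> (\<Sum>w\<in>T. \<Sum>x\<in>T. \<bar>e w - e x\<bar> powr p)"
      using s3 by (intro sum_mono) auto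
    finally show ?thesis .
  qed
  have Dl0: "0 \<le> Dl" unfolding Dl_def by (simp add: sum_nonneg)
  have s6: "2 * K * Dl \<le> B * m * Dl"
  proof (cases "card T = 1")
    case True
    then obtain w where "T = {w}" by (auto simp: card_Suc_eq)
    hence "Dl = 0" unfolding Dl_def E_def m_def by simp
    thus ?thesis by simp
  next
    case False
    have "card T > 0" using assms by (simp add: card_gt_0_iff)
    hence "card T \<ge> 2" using False by linarith
    hence m2: "m \<ge> 2" unfolding m_def by simp
    have "B = 2 powr (p-1) * D powr (p-1)" unfolding B_def using assms by (simp add: powr_mult)
    moreover have "p \<le> 2 powr (p-1)" using two_pow_ge assms by simp
    ultimately have "K \<le> B" unfolding K_def by (simp add: mult_right_mono)
    moreover have "2 * B \<le> m * B" using m2 B0 by (simp add: mult_right_mono)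
    ultimately have "2 * K \<le> m * B" by linarith
    from mult_right_mono[OF this Dl0] show ?thesis by (simp add: algebra_simps)
  qed
  show ?thesis using s2 s5 s6 unfolding m_def[symmetric] E_def[symmetric] y_def[symmetric] by linarith
qed

lemma SPbound: fixes d :: "'a \<Rightarrow> real" and p :: real
  assumes "finite S" "\<forall>i\<in>S. 0 < d i" "0 < p"
  shows "(\<Sum>i\<in>S. \<Sum>j\<in>S. \<bar>d i - d j\<bar> powr p) \<le> 2 * (real (card S) - 1) * (\<Sum>i\<in>S. d i powr p)"
proof -
  have t: "\<bar>d i - d j\<bar> powr p \<le> d i powr p + d j powr p - (if i = j then 2 * d i powr p else 0)"
    if "i \<in> S" "j \<in> S" for i j
  proof (cases "i = j")
    case True thus ?thesis by simp
  next
    case False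
    have "0 < d i" "0 < d j" using assms(2) that by auto
    hence "\<bar>d i - d j\<bar> \<le> max (d i) (d j)" by (auto simp: max_def)
    hence "\<bar>d i - d j\<bar> powr p \<le> max (d i) (d j) powr p" using assms(3) by (intro powr_mono2) auto
    also have "\<dots> \<le> d i powr p + d j powr p" by (cases "d i \<le> d j") (auto simp: max_def)
    finally show ?thesis using False by simp
  qed
  have "(\<Sum>i\<in>S. \<Sum>j\<in>S. \<bar>d i - d j\<bar> powr p)
     \<le> (\<Sum>i\<in>S. \<Sum>j\<in>S. d i powr p + d j powr p - (if i = j then 2 * d i powr p else 0))"
    using t by (intro sum_mono) auto
  also have "\<dots> = (\<Sum>i\<in>S. real (card S) * d i powr p + (\<Sum>j\<in>S. d j powr p) - 2 * d i powr p)"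
    using assms(1) by (intro sum.cong) (auto simp: sum.distrib sum_subtractf)
  also have "\<dots> = 2 * (real (card S) - 1) * (\<Sum>i\<in>S. d i powr p)"
    by (simp add: sum.distrib sum_subtractf sum_distrib_left[symmetric] algebra_simps)
  finally show ?thesis .
qed

lemma assembly1: fixes d e :: "'a \<Rightarrow> real" and p c :: real
  assumes "finite S" "\<forall>i\<in>S. 0 < d i" "0 < p" "0 \<le> c"
  and row: "\<forall>i\<in>S. (real (card T) + (1 - c powr p) * (real (card S) - 1)) * d i powr p
      \<le> c powr p * (\<Sum>w\<in>T. (d i + e w) powr p)"
  and u0: "c powr p \<le> 1"
  shows "(\<Sum>i\<in>S. \<Sum>j\<in>S. \<bar>d i - d j\<bar> powr p) + 2 * real (card T) * (\<Sum>i\<in>S. d i powr p)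
    \<le> c powr p * ((\<Sum>i\<in>S. \<Sum>j\<in>S. \<bar>d i - d j\<bar> powr p) + 2 * (\<Sum>i\<in>S. \<Sum>w\<in>T. (d i + e w) powr p)
        + (\<Sum>w\<in>T. \<Sum>x\<in>T. \<bar>e w - e x\<bar> powr p))"
proof -
  define SP where "SP = (\<Sum>i\<in>S. \<Sum>j\<in>S. \<bar>d i - d j\<bar> powr p)"
  define DS where "DS = (\<Sum>i\<in>S. d i powr p)"
  define XX where "XX = (\<Sum>i\<in>S. \<Sum>w\<in>T. (d i + e w) powr p)"
  define TP where "TP = (\<Sum>w\<in>T. \<Sum>x\<in>T. \<bar>e w - e x\<bar> powr p)"
  define u where "u = 1 - c powr p"
  define k where "k = real (card S)"
  define m where "m = real (card T)"
  have TP0: "0 \<le> TP" unfolding TP_def by (intro sum_nonneg) auto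
  have "SP \<le> 2 * (k - 1) * DS" unfolding SP_def DS_def k_def using SPbound assms by blast
  hence a: "u * SP \<le> u * (2 * (k - 1) * DS)" using u0 unfolding u_def by (intro mult_left_mono) auto
  have "(\<Sum>i\<in>S. (m + u * (k - 1)) * d i powr p) \<le> (\<Sum>i\<in>S. c powr p * (\<Sum>w\<in>T. (d i + e w) powr p))"
    using row unfolding u_def k_def m_def by (intro sum_mono) auto
  hence b: "(m + u * (k - 1)) * DS \<le> c powr p * XX" unfolding DS_def XX_def by (simp add: sum_distrib_left)
  have c0: "0 \<le> c powr p * TP" using TP0 by simp
  have "SP + 2 * m * DS = (1 - u) * SP + (u * SP + 2 * m * DS)" by (simp add: algebra_simps)
  also have "\<dots> \<le> (1 - u) * SP + 2 * ((m + u * (k - 1)) * DS)" using a by (simp add: algebra_simps)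
  also have "\<dots> \<le> (1 - u) * SP + 2 * (c powr p * XX)" using b by simp
  also have "\<dots> \<le> c powr p * (SP + 2 * XX + TP)" using c0 unfolding u_def by (simp add: algebra_simps)
  finally show ?thesis unfolding SP_def DS_def XX_def TP_def m_def .
qed



lemma core: fixes d e :: "'a \<Rightarrow> real" and p :: real
  assumes fS: "finite S" and fT: "finite T" and neS: "S \<noteq> {}" and neT: "T \<noteq> {}"
  and n3: "card S + card T \<ge> 3"
  and dpos: "\<forall>i\<in>S. 0 < d i" and epos: "\<forall>w\<in>T. 0 \<le> e w"
  and sums: "sum d S = sum e T" and p0: "0 < p"
  shows "(\<Sum>i\<in>S. \<Sum>j\<in>S. \<bar>d i - d j\<bar> powr p) + 2 * real (card T) * (\<Sum>i\<in>S. d i powr p)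
    \<le> (1 - 1 / real (card S + card T)) powr p * ((\<Sum>i\<in>S. \<Sum>j\<in>S. \<bar>d i - d j\<bar> powr p)
        + 2 * (\<Sum>i\<in>S. \<Sum>w\<in>T. (d i + e w) powr p) + (\<Sum>w\<in>T. \<Sum>x\<in>T. \<bar>e w - e x\<bar> powr p))"
proof -
  define k where "k = real (card S)"
  define m where "m = real (card T)"
  define c where "c = 1 - 1 / (k + m)"
  define u where "u = 1 - c powr p"
  define E where "E = sum d S"
  define X where "X = (\<lambda>i. \<Sum>w\<in>T. (d i + e w) powr p)"
  have cdef: "1 - 1 / real (card S + card T) = c" unfolding c_def k_def m_def by simp
  have k1: "k \<ge> 1" unfolding k_def using fS neS by (simp add: Suc_leI card_gt_0_iff)
  have m1: "m \<ge> 1" unfolding m_def using fT neT by (simp add: Suc_leI card_gt_0_iff)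
  have km3: "k + m \<ge> 3" unfolding k_def m_def using n3
    by (metis of_nat_add of_nat_le_iff of_nat_numeral)
  have c0: "0 \<le> c" "c \<le> 1" unfolding c_def using k1 m1 by (auto simp: field_simps)
  have cp1: "c powr p \<le> 1" using powr_le_one_base[of c p] c0 p0 by simp
  have cp0: "0 \<le> c powr p" by simp
  have dE: "d i \<le> E" if "i \<in> S" for i unfolding E_def using fS dpos that
    by (intro member_le_sum) auto
  have E_e: "E = sum e T" unfolding E_def using sums .
  have rgen: "c * (m+1) / m \<ge> 1"
  proof -
    have "c * (m+1) - m = (k-1)/(k+m)" unfolding c_def using k1 m1 by (simp add: field_simps)
    moreover have "0 \<le> (k-1)/(k+m)" using k1 m1 by simp
    ultimately have "m \<le> c * (m+1)" by linarith
    thus ?thesis using m1 by (simp add: le_divide_eq)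
  qed
  have main: "(\<Sum>i\<in>S. \<Sum>j\<in>S. \<bar>d i - d j\<bar> powr p) + 2 * real (card T) * (\<Sum>i\<in>S. d i powr p)
    \<le> c powr p * ((\<Sum>i\<in>S. \<Sum>j\<in>S. \<bar>d i - d j\<bar> powr p)
        + 2 * (\<Sum>i\<in>S. \<Sum>w\<in>T. (d i + e w) powr p) + (\<Sum>w\<in>T. \<Sum>x\<in>T. \<bar>e w - e x\<bar> powr p))"
  proof (cases "1 \<le> p")
    case True
    show ?thesis
    proof (rule assembly1[OF fS dpos p0 c0(1) _ cp1], intro ballI)
      fix i assume i: "i \<in> S"
      have di: "0 < d i" using dpos i by auto
      define r where "r = c * (m+1) / m"
      have r1: "1 \<le> r" using rgen unfolding r_def .
      have J: "m * (d i + E/m) powr p \<le> X i" unfolding X_def m_def E_e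
        by (rule jensen_row) (use fT neT di epos True in auto)
      have dr: "d i * r \<le> c * (d i + E/m)"
      proof -
        have "c * (d i + E/m) - d i * r = c * (E - d i) / m" unfolding r_def using m1
          by (simp add: field_simps)
        moreover have "0 \<le> c * (E - d i) / m" using c0 dE[OF i] m1 by simp
        ultimately show ?thesis by linarith
      qed
      have P: "m + u * (k-1) \<le> m * r powr p" unfolding u_def r_def c_def
        using scalarP1[OF k1 m1 True] by (simp add: mult.commute)
      have "(m + u * (k-1)) * d i powr p \<le> (m * r powr p) * d i powr p"
        by (rule mult_right_mono[OF P]) simp
      also have "\<dots> = m * (d i powr p * r powr p)" by (simp add: algebra_simps)
      also have "d i powr p * r powr p = (d i * r) powr p" using di r1 by (simp add: powr_mult)
      also have "m * (d i * r) powr p \<le> m * (c * (d i + E/m)) powr p"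
        using dr di r1 p0 m1 by (intro mult_left_mono powr_mono2) auto
      also have "m * (c * (d i + E/m)) powr p = c powr p * (m * (d i + E/m) powr p)"
        using c0 di m1 dE[OF i] by (simp add: powr_mult)
      also have "\<dots> \<le> c powr p * X i" using J by (rule mult_left_mono) simp
      finally have "(m + u * (k-1)) * d i powr p \<le> c powr p * X i" .
      thus "(real (card T) + (1 - c powr p) * (real (card S) - 1)) * d i powr p
          \<le> c powr p * (\<Sum>w\<in>T. (d i + e w) powr p)" unfolding u_def k_def m_def X_def .
    qed
  next
    case False
    hence p1: "p \<le> 1" by simp
    have vx: "(m - 1) * d i powr p + (d i + E) powr p \<le> X i" if "i \<in> S" for i
      unfolding X_def m_def E_e using vertex[OF fT neT, of "d i" e p] dpos epos p0 p1 that by auto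
    have kk: "k + m = real (card S + card T)" unfolding k_def m_def by simp
    show ?thesis
    proof (cases "\<forall>i\<in>S. 2 * d i \<le> E")
      case True
      show ?thesis
      proof (rule assembly1[OF fS dpos p0 c0(1) _ cp1], intro ballI)
        fix i assume i: "i \<in> S"
        have di: "0 < d i" using dpos i by auto
        have "(3 * d i) powr p \<le> (d i + E) powr p" using True i di p0 by (intro powr_mono2) auto
        moreover have "(3 * d i) powr p = 3 powr p * d i powr p" using di by (simp add: powr_mult)
        ultimately have "(m - 1) * d i powr p + 3 powr p * d i powr p \<le> X i" using vx[OF i] by linarith
        hence "c powr p * ((m - 1) * d i powr p + 3 powr p * d i powr p) \<le> c powr p * X i"
          by (rule mult_left_mono) simp
        moreover have "c powr p * ((m - 1) * d i powr p + 3 powr p * d i powr p)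
            = (c powr p * (m - 1) + (3 * c) powr p) * d i powr p"
          using c0 by (simp add: powr_mult algebra_simps)
        moreover have "m + u * (k-1) \<le> c powr p * (m - 1) + (3 * c) powr p"
          unfolding u_def c_def using scalarA[OF k1 m1 km3 p0 p1] by simp
        ultimately have "(m + u * (k-1)) * d i powr p \<le> c powr p * X i"
          using mult_right_mono[OF \<open>m + u * (k-1) \<le> _\<close>, of "d i powr p"] by simp
        thus "(real (card T) + (1 - c powr p) * (real (card S) - 1)) * d i powr p
            \<le> c powr p * (\<Sum>w\<in>T. (d i + e w) powr p)" unfolding u_def k_def m_def X_def .
      qed
    next
      case False
      then obtain i0 where i0: "i0 \<in> S" "E < 2 * d i0" by auto
      define D where "D = d i0"
      define S' where "S' = S - {i0}"
      define F where "F = (\<lambda>i j. \<bar>d i - d j\<bar> powr p)"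
      have D0: "0 < D" unfolding D_def using dpos i0 by auto
      have DE: "D \<le> E" unfolding D_def using dE i0 by auto
      have fS': "finite S'" unfolding S'_def using fS by simp
      have "card S > 0" using fS i0 by (auto simp: card_gt_0_iff)
      hence "card S \<ge> 1" by simp
      hence cardS': "real (card S') = k - 1" unfolding S'_def k_def using i0 fS
        by (simp add: card_Diff_singleton of_nat_diff)
      have dj: "0 < d j \<and> D + d j \<le> E" if "j \<in> S'" for j
      proof -
        have j: "j \<in> S" "j \<noteq> i0" using that unfolding S'_def by auto
        have "sum d {i0, j} \<le> sum d S" using fS i0 j dpos
          by (intro sum_mono2) (auto intro: less_imp_le)
        thus ?thesis using j dpos unfolding E_def D_def by auto
      qed
      have djD: "d j < D" if "j \<in> S'" for j using dj[OF that] i0 unfolding D_def by linarith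
      have G: "(\<Sum>j\<in>S. F i j) = F i i0 + (\<Sum>j\<in>S'. F i j)" for i
        unfolding S'_def using sum.remove[OF fS i0(1)] by simp
      have SPsplit: "(\<Sum>i\<in>S. \<Sum>j\<in>S. F i j)
          = (F i0 i0 + (\<Sum>j\<in>S'. F i0 j)) + (\<Sum>i\<in>S'. F i i0 + (\<Sum>j\<in>S'. F i j))"
        unfolding G S'_def using sum.remove[OF fS i0(1), of "\<lambda>i. F i i0 + (\<Sum>j\<in>S - {i0}. F i j)"]
        by simp
      have F1: "F i0 j \<le> D powr p" "F j i0 \<le> D powr p" if "j \<in> S'" for j
      proof -
        have "\<bar>d i0 - d j\<bar> \<le> D" "\<bar>d j - d i0\<bar> \<le> D" using dj[OF that] djD[OF that] unfolding D_def by auto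
        thus "F i0 j \<le> D powr p" "F j i0 \<le> D powr p" unfolding F_def using p0 by (auto intro: powr_mono2)
      qed
      have SP1: "(\<Sum>j\<in>S'. F i0 j) \<le> (k-1) * D powr p"
        using sum_mono[of S' "\<lambda>j. F i0 j" "\<lambda>j. D powr p"] F1 cardS' by simp
      have SP2: "(\<Sum>j\<in>S'. F j i0) \<le> (k-1) * D powr p"
        using sum_mono[of S' "\<lambda>j. F j i0" "\<lambda>j. D powr p"] F1 cardS' by simp
      have SP3: "(\<Sum>i\<in>S'. \<Sum>j\<in>S'. F i j) \<le> 2 * (k - 2) * (\<Sum>j\<in>S'. d j powr p)"
        using SPbound[OF fS', of d p] dj p0 cardS' unfolding F_def by auto
      define Sg where "Sg = (\<Sum>j\<in>S'. d j powr p)"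
      define SP where "SP = (\<Sum>i\<in>S. \<Sum>j\<in>S. F i j)"
      have SPb: "SP \<le> 2 * (k-1) * D powr p + 2 * (k-2) * Sg"
        
      proof -
        have eq1: "(\<Sum>i\<in>S'. F i i0 + (\<Sum>j\<in>S'. F i j)) = (\<Sum>i\<in>S'. F i i0) + (\<Sum>i\<in>S'. \<Sum>j\<in>S'. F i j)"
          by (simp add: sum.distrib)
        have eq2: "2 * (k-1) * D powr p = (k-1) * D powr p + (k-1) * D powr p" by (simp add: algebra_simps)
        have "F i0 i0 = 0" unfolding F_def by simp
        thus ?thesis unfolding SP_def Sg_def SPsplit eq1 eq2 using SP1 SP2 SP3 by linarith
      qed
      define TP where "TP = (\<Sum>w\<in>T. \<Sum>x\<in>T. \<bar>e w - e x\<bar> powr p)"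
      have row0: "2 * m * D powr p \<le> c powr p * (2 * X i0 + TP)"
      proof -
        have h1: "0 < d i0" "d i0 \<le> sum e T" "sum e T \<le> 2 * d i0"
          using D0 DE i0 E_e unfolding D_def by auto
        have "2 * m * (D + E/m) powr p \<le> 2 * X i0 + TP" unfolding m_def X_def TP_def E_e D_def
          using rowT[OF fT neT h1(1) epos h1(2) h1(3) p0 p1] .
        hence "c powr p * (2 * m * (D + E/m) powr p) \<le> c powr p * (2 * X i0 + TP)"
          by (rule mult_left_mono) simp
        moreover have "c powr p * (2 * m * (D + E/m) powr p) = 2 * m * (c * (D + E/m)) powr p"
          using c0 by (simp add: powr_mult)
        moreover have "D \<le> c * (D + E/m)"
        proof -
          have "c * (D + E/m) - D * (c * (m+1) / m) = c * (E - D) / m" using m1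
            by (simp add: field_simps)
          moreover have "0 \<le> c * (E - D) / m" using c0 DE m1 by simp
          moreover have "D * 1 \<le> D * (c * (m+1) / m)" by (rule mult_left_mono[OF rgen]) (use D0 in simp)
          ultimately show ?thesis by linarith
        qed
        hence "D powr p \<le> (c * (D + E/m)) powr p" using D0 p0 by (intro powr_mono2) auto
        hence "2 * m * D powr p \<le> 2 * m * (c * (D + E/m)) powr p" using m1 by simp
        ultimately show ?thesis by linarith
      qed
      have rowj: "m * d j powr p + u * D powr p + u * (k-2) * d j powr p \<le> c powr p * X j"
        if j: "j \<in> S'" for j
      proof -
        have dj0: "0 < d j" and djE: "D + d j \<le> E" using dj[OF j] by auto
        define x where "x = d j / D"
        have x0: "0 < x" "x \<le> 1" unfolding x_def using dj0 D0 djD[OF j] by auto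
        have "card S' > 0" using fS' j by (auto simp: card_gt_0_iff)
        hence "real (card S') \<ge> 1" by simp
        hence k2: "k \<ge> 2" using cardS' by linarith
        have Q: "m * x powr p + u + u * (k-2) * x powr p \<le> c powr p * (m-1) * x powr p + (c*(1+2*x)) powr p"
          unfolding u_def c_def using scalarQ[OF k2 m1 p0 p1 x0] by simp
        hence "D powr p * (m * x powr p + u + u * (k-2) * x powr p)
            \<le> D powr p * (c powr p * (m-1) * x powr p + (c*(1+2*x)) powr p)"
          by (rule mult_left_mono) simp
        moreover have Dx: "D powr p * x powr p = d j powr p" unfolding x_def using D0
          by (simp add: powr_divide)
        moreover have Dc: "D powr p * (c*(1+2*x)) powr p = c powr p * (D + 2 * d j) powr p"
        proof -
          have e1: "D * (c * (1 + 2*x)) = c * (D + 2 * d j)" unfolding x_def using D0 by (simp add: field_simps)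
          have "D powr p * (c*(1+2*x)) powr p = (D * (c*(1+2*x))) powr p"
            using D0 c0 x0 by (simp add: powr_mult)
          also have "\<dots> = (c * (D + 2 * d j)) powr p" by (simp only: e1)
          also have "\<dots> = c powr p * (D + 2 * d j) powr p"
            using c0 D0 dj0 by (simp add: powr_mult)
          finally show ?thesis .
        qed
        moreover have "D powr p * (m * x powr p + u + u * (k-2) * x powr p)
            = m * (D powr p * x powr p) + u * D powr p + u * (k-2) * (D powr p * x powr p)"
          by (simp add: algebra_simps)
        moreover have "D powr p * (c powr p * (m-1) * x powr p + (c*(1+2*x)) powr p)
            = c powr p * (m-1) * (D powr p * x powr p) + D powr p * (c*(1+2*x)) powr p"
          by (simp add: algebra_simps)
        ultimately have A1: "m * d j powr p + u * D powr p + u * (k-2) * d j powr p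
            \<le> c powr p * (m-1) * d j powr p + c powr p * (D + 2 * d j) powr p"
          by (simp only: Dx Dc)
        have "(D + 2 * d j) powr p \<le> (d j + E) powr p" using djE D0 dj0 p0 by (intro powr_mono2) auto
        hence "(m - 1) * d j powr p + (D + 2 * d j) powr p \<le> X j" using vx[of j] j unfolding S'_def by auto
        hence "c powr p * ((m - 1) * d j powr p + (D + 2 * d j) powr p) \<le> c powr p * X j"
          by (rule mult_left_mono) simp
        thus ?thesis using A1 by (simp add: algebra_simps)
      qed
      have rows: "m * Sg + (k-1) * (u * D powr p) + u * (k-2) * Sg \<le> c powr p * (\<Sum>j\<in>S'. X j)"
      proof -
        have "(\<Sum>j\<in>S'. m * d j powr p + u * D powr p + u * (k-2) * d j powr p) \<le> (\<Sum>j\<in>S'. c powr p * X j)"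
          using rowj by (rule sum_mono)
        thus ?thesis unfolding Sg_def using cardS'
          by (simp add: sum.distrib sum_distrib_left[symmetric])
      qed
      have DS: "(\<Sum>i\<in>S. d i powr p) = D powr p + Sg" unfolding D_def Sg_def S'_def
        using sum.remove[OF fS i0(1)] by simp
      have XS: "(\<Sum>i\<in>S. X i) = X i0 + (\<Sum>j\<in>S'. X j)" unfolding S'_def
        using sum.remove[OF fS i0(1)] by simp
      have u0: "0 \<le> u" unfolding u_def using cp1 by simp
      have uSP: "u * SP \<le> u * (2 * (k-1) * D powr p + 2 * (k-2) * Sg)" using SPb u0 by (rule mult_left_mono)
      have "SP + 2 * m * (D powr p + Sg) = (1 - u) * SP + u * SP + 2 * m * D powr p + 2 * m * Sg"
        by (simp add: algebra_simps)
      also have "\<dots> \<le> (1 - u) * SP + u * (2 * (k-1) * D powr p + 2 * (k-2) * Sg) + 2 * m * D powr p + 2 * m * Sg"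
        using uSP by simp
      also have "\<dots> = (1 - u) * SP + 2 * m * D powr p + 2 * (m * Sg + (k-1) * (u * D powr p) + u * (k-2) * Sg)"
        by (simp add: algebra_simps)
      also have "\<dots> \<le> (1 - u) * SP + c powr p * (2 * X i0 + TP) + 2 * (c powr p * (\<Sum>j\<in>S'. X j))"
        using row0 rows by (intro add_mono order_refl mult_left_mono) auto
      also have "\<dots> = c powr p * (SP + 2 * (X i0 + (\<Sum>j\<in>S'. X j)) + TP)" unfolding u_def
        by (simp add: algebra_simps)
      finally have fin: "SP + 2 * m * (D powr p + Sg) \<le> c powr p * (SP + 2 * (X i0 + (\<Sum>j\<in>S'. X j)) + TP)" .
      have XS': "(\<Sum>i\<in>S. \<Sum>w\<in>T. (d i + e w) powr p) = X i0 + (\<Sum>j\<in>S'. X j)"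
        using XS unfolding X_def .
      show ?thesis unfolding DS XS' using fin unfolding SP_def F_def TP_def m_def .
    qed
  qed
  thus ?thesis unfolding cdef .
qed



lemma K_adj: "adj (K_V n) K_E v w \<longleftrightarrow> v < n \<and> w < n \<and> v \<noteq> w"
  unfolding adj_def K_V_def K_E_def by auto

lemma K_dist: assumes "v < n" "w < n"
  shows "graph_dist (K_V n) K_E v w = (if v = w then 0 else 1)"
proof (cases "v = w")
  case True thus ?thesis unfolding graph_dist_def by (auto intro: Least_equality)
next
  case False
  have "(LEAST k. (adj (K_V n) K_E ^^ k) v w) = 1"
  proof (rule Least_equality)
    have "(adj (K_V n) K_E ^^ 1) = adj (K_V n) K_E" by (rule relpowp_1)
    thus "(adj (K_V n) K_E ^^ 1) v w" using assms False by (simp add: K_adj)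
    fix y assume "(adj (K_V n) K_E ^^ y) v w"
    thus "1 \<le> y" using False by (cases y) auto
  qed
  thus ?thesis unfolding graph_dist_def using False by simp
qed

lemma K_ball: assumes "v < n"
  shows "ball_G (K_V n) K_E v r = (if r = 0 then {v} else {0..<n})"
  unfolding ball_G_def using assms K_dist[OF assms] by (auto simp: K_V_def split: if_splits)

lemma K_maxop: assumes "v < n"
  shows "maxop (K_V n) K_E f v = max \<bar>f v\<bar> ((\<Sum>w<n. \<bar>f w\<bar>) / real n)"
proof -
  define A where "A = (\<Sum>w<n. \<bar>f w\<bar>) / real n"
  have h: "(\<Sum>w\<in>ball_G (K_V n) K_E v r. \<bar>f w\<bar>) / real (card (ball_G (K_V n) K_E v r))
        = (if r = 0 then \<bar>f v\<bar> else A)" for r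
    using K_ball[OF assms, of r] unfolding A_def by (simp add: atLeast0LessThan)
  have rng: "range (\<lambda>r::nat. if r = 0 then \<bar>f v\<bar> else A) = {\<bar>f v\<bar>, A}"
  proof (intro equalityI subsetI)
    fix y assume "y \<in> range (\<lambda>r::nat. if r = 0 then \<bar>f v\<bar> else A)"
    thus "y \<in> {\<bar>f v\<bar>, A}" by auto
  next
    fix y assume y: "y \<in> {\<bar>f v\<bar>, A}"
    show "y \<in> range (\<lambda>r::nat. if r = 0 then \<bar>f v\<bar> else A)"
    proof (cases "y = \<bar>f v\<bar>")
      case True thus ?thesis by (intro image_eqI[of _ _ 0]) auto
    next
      case False hence "y = A" using y by auto
      thus ?thesis by (intro image_eqI[of _ _ 1]) auto
    qed
  qed
  have "maxop (K_V n) K_E f v = Sup {\<bar>f v\<bar>, A}" unfolding maxop_def h rng by simp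
  also have "\<dots> = max \<bar>f v\<bar> A" by (simp add: cSup_insert sup_max)
  finally show ?thesis unfolding A_def .
qed

lemma var_p_sum: fixes g :: "nat \<Rightarrow> real" assumes "p > 0"
  shows "var_p (K_V n) K_E p g = ((\<Sum>v<n. \<Sum>w<n. \<bar>g v - g w\<bar> powr p) / 2) powr (1/p)"
proof -
  have set: "{(v,w). adj (K_V n) K_E v w} = Sigma {..<n} (\<lambda>v. {..<n} - {v})"
    by (auto simp: K_adj)
  have "(\<Sum>(v,w)\<in>{(v,w). adj (K_V n) K_E v w}. \<bar>g v - g w\<bar> powr p)
      = (\<Sum>v<n. \<Sum>w\<in>{..<n} - {v}. \<bar>g v - g w\<bar> powr p)"
    unfolding set by (subst sum.Sigma) auto
  also have "\<dots> = (\<Sum>v<n. \<Sum>w<n. \<bar>g v - g w\<bar> powr p)"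
  proof (rule sum.cong[OF refl])
    fix v assume "v \<in> {..<n}"
    thus "(\<Sum>w\<in>{..<n} - {v}. \<bar>g v - g w\<bar> powr p) = (\<Sum>w<n. \<bar>g v - g w\<bar> powr p)"
      using sum.remove[of "{..<n}" v "\<lambda>w. \<bar>g v - g w\<bar> powr p"] by simp
  qed
  finally show ?thesis unfolding var_p_def by simp
qed

lemma split4: fixes F :: "'a \<Rightarrow> 'a \<Rightarrow> real"
  assumes "finite S" "finite T" "S \<inter> T = {}"
  shows "(\<Sum>v\<in>S \<union> T. \<Sum>w\<in>S \<union> T. F v w) = (\<Sum>v\<in>S. \<Sum>w\<in>S. F v w) + (\<Sum>v\<in>S. \<Sum>w\<in>T. F v w)
     + (\<Sum>v\<in>T. \<Sum>w\<in>S. F v w) + (\<Sum>v\<in>T. \<Sum>w\<in>T. F v w)"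
  using assms by (simp add: sum.union_disjoint sum.distrib)

theorem theorem1:
  fixes n :: nat and p :: real and f :: "nat \<Rightarrow> real"
  assumes "n \<ge> 3" and "p > 0"
  shows "var_p (K_V n) K_E p (maxop (K_V n) K_E f)
           \<le> (1 - 1 / real n) * var_p (K_V n) K_E p f"
proof -
  define V where "V = {..<n}"
  define g where "g = (\<lambda>v. \<bar>f v\<bar>)"
  define A where "A = (\<Sum>w<n. g w) / real n"
  define a where "a = (\<lambda>v. max (g v) A)"
  define S where "S = {v\<in>V. A < g v}"
  define T where "T = {v\<in>V. g v \<le> A}"
  define d where "d = (\<lambda>v. g v - A)"
  define e where "e = (\<lambda>v. A - g v)"
  define c where "c = 1 - 1 / real n"
  define L where "L = (\<Sum>v\<in>V. \<Sum>w\<in>V. \<bar>a v - a w\<bar> powr p)"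
  define Rg where "Rg = (\<Sum>v\<in>V. \<Sum>w\<in>V. \<bar>g v - g w\<bar> powr p)"
  define Rf where "Rf = (\<Sum>v\<in>V. \<Sum>w\<in>V. \<bar>f v - f w\<bar> powr p)"
  have n0: "n > 0" using assms by simp
  have fV: "finite V" unfolding V_def by simp
  have c0: "0 < c" unfolding c_def using assms by (simp add: field_simps)
  have VST: "V = S \<union> T" "S \<inter> T = {}" unfolding S_def T_def by auto
  have fS: "finite S" "finite T" using fV unfolding S_def T_def by auto
  have sumV: "(\<Sum>v\<in>V. g v) = real n * A" unfolding A_def V_def using n0 by simp
  have Mf: "maxop (K_V n) K_E f v = a v" if "v \<in> V" for v
    using K_maxop[of v n f] that unfolding V_def a_def g_def A_def by simp
  have varM: "var_p (K_V n) K_E p (maxop (K_V n) K_E f) = (L / 2) powr (1/p)"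
    unfolding var_p_sum[OF assms(2)] L_def V_def[symmetric] using Mf by (simp cong: sum.cong)
  have varf: "var_p (K_V n) K_E p f = (Rf / 2) powr (1/p)"
    unfolding var_p_sum[OF assms(2)] Rf_def V_def ..
  have Rgf: "Rg \<le> Rf" unfolding Rg_def Rf_def g_def using assms(2)
    by (intro sum_mono powr_mono2) auto
  have L0: "0 \<le> L" unfolding L_def by (intro sum_nonneg) auto
  have Rg0: "0 \<le> Rg" unfolding Rg_def by (intro sum_nonneg) auto
  have key: "L \<le> c powr p * Rg"
  proof (cases "S = {}")
    case True
    hence "a v = A" if "v \<in> V" for v using that unfolding a_def S_def by auto
    hence "L = 0" unfolding L_def by simp
    thus ?thesis using Rg0 by simp
  next
    case False
    have Tne: "T \<noteq> {}"
    proof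
      assume "T = {}"
      hence "\<forall>v\<in>V. A < g v" unfolding T_def by auto
      moreover have "V \<noteq> {}" unfolding V_def using n0 by auto
      ultimately have "(\<Sum>v\<in>V. A) < (\<Sum>v\<in>V. g v)" using fV by (intro sum_strict_mono) auto
      thus False using sumV unfolding V_def by simp
    qed
    have cardST: "card S + card T = n"
    proof -
      have "card V = n" unfolding V_def by simp
      thus ?thesis using card_Un_disjoint[OF fS VST(2)] VST(1) by simp
    qed
    have dpos: "\<forall>i\<in>S. 0 < d i" unfolding S_def d_def by auto
    have epos: "\<forall>w\<in>T. 0 \<le> e w" unfolding T_def e_def by auto
    have sums: "sum d S = sum e T"
    proof -
      have "(\<Sum>v\<in>V. g v - A) = 0" using sumV by (simp add: sum_subtractf V_def)
      hence "(\<Sum>v\<in>S. g v - A) + (\<Sum>v\<in>T. g v - A) = 0" using VST fS by (simp add: sum.union_disjoint)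
      moreover have "(\<Sum>v\<in>T. g v - A) = - sum e T" unfolding e_def by (simp add: sum_negf[symmetric])
      ultimately show ?thesis unfolding d_def by simp
    qed
    have C: "(\<Sum>i\<in>S. \<Sum>j\<in>S. \<bar>d i - d j\<bar> powr p) + 2 * real (card T) * (\<Sum>i\<in>S. d i powr p)
      \<le> c powr p * ((\<Sum>i\<in>S. \<Sum>j\<in>S. \<bar>d i - d j\<bar> powr p)
        + 2 * (\<Sum>i\<in>S. \<Sum>w\<in>T. (d i + e w) powr p) + (\<Sum>w\<in>T. \<Sum>x\<in>T. \<bar>e w - e x\<bar> powr p))"
      using core[OF fS False Tne _ dpos epos sums assms(2)] cardST assms(1) unfolding c_def by simp
    have aS: "a v = g v" if "v \<in> S" for v using that unfolding a_def S_def by auto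
    have aT: "a v = A" if "v \<in> T" for v using that unfolding a_def T_def by auto
    have L1: "(\<Sum>v\<in>S. \<Sum>w\<in>S. \<bar>a v - a w\<bar> powr p) = (\<Sum>i\<in>S. \<Sum>j\<in>S. \<bar>d i - d j\<bar> powr p)"
      using aS unfolding d_def by (intro sum.cong refl) auto
    have L2: "(\<Sum>v\<in>S. \<Sum>w\<in>T. \<bar>a v - a w\<bar> powr p) = real (card T) * (\<Sum>i\<in>S. d i powr p)"
    proof -
      have "(\<Sum>v\<in>S. \<Sum>w\<in>T. \<bar>a v - a w\<bar> powr p) = (\<Sum>v\<in>S. \<Sum>w\<in>T. d v powr p)"
        using aS aT dpos by (intro sum.cong refl) (auto simp: d_def)
      thus ?thesis by (simp add: sum_distrib_left)
    qed
    have L3: "(\<Sum>v\<in>T. \<Sum>w\<in>S. \<bar>a v - a w\<bar> powr p) = real (card T) * (\<Sum>i\<in>S. d i powr p)"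
    proof -
      have "(\<Sum>v\<in>T. \<Sum>w\<in>S. \<bar>a v - a w\<bar> powr p) = (\<Sum>v\<in>T. \<Sum>w\<in>S. d w powr p)"
        using aS aT dpos by (intro sum.cong refl) (auto simp: d_def)
      thus ?thesis by simp
    qed
    have L4: "(\<Sum>v\<in>T. \<Sum>w\<in>T. \<bar>a v - a w\<bar> powr p) = 0"
      using aT by simp
    have LL: "L = (\<Sum>i\<in>S. \<Sum>j\<in>S. \<bar>d i - d j\<bar> powr p) + 2 * real (card T) * (\<Sum>i\<in>S. d i powr p)"
      unfolding L_def VST(1) split4[OF fS VST(2)] L1 L2 L3 L4 by simp
    have R1: "(\<Sum>v\<in>S. \<Sum>w\<in>S. \<bar>g v - g w\<bar> powr p) = (\<Sum>i\<in>S. \<Sum>j\<in>S. \<bar>d i - d j\<bar> powr p)"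
      unfolding d_def by simp
    have R2: "(\<Sum>v\<in>S. \<Sum>w\<in>T. \<bar>g v - g w\<bar> powr p) = (\<Sum>i\<in>S. \<Sum>w\<in>T. (d i + e w) powr p)"
      unfolding d_def e_def S_def T_def by (intro sum.cong refl) auto
    have R3: "(\<Sum>v\<in>T. \<Sum>w\<in>S. \<bar>g v - g w\<bar> powr p) = (\<Sum>i\<in>S. \<Sum>w\<in>T. (d i + e w) powr p)"
    proof -
      have "(\<Sum>v\<in>T. \<Sum>w\<in>S. \<bar>g v - g w\<bar> powr p) = (\<Sum>v\<in>T. \<Sum>w\<in>S. (d w + e v) powr p)"
        unfolding d_def e_def S_def T_def by (intro sum.cong refl) auto
      thus ?thesis by (simp add: sum.swap[of _ T S])
    qed
    have R4: "(\<Sum>v\<in>T. \<Sum>w\<in>T. \<bar>g v - g w\<bar> powr p) = (\<Sum>w\<in>T. \<Sum>x\<in>T. \<bar>e w - e x\<bar> powr p)"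
      unfolding e_def by (intro sum.cong refl) (simp add: abs_minus_commute)
    have RR: "Rg = (\<Sum>i\<in>S. \<Sum>j\<in>S. \<bar>d i - d j\<bar> powr p)
        + 2 * (\<Sum>i\<in>S. \<Sum>w\<in>T. (d i + e w) powr p) + (\<Sum>w\<in>T. \<Sum>x\<in>T. \<bar>e w - e x\<bar> powr p)"
      unfolding Rg_def VST(1) split4[OF fS VST(2)] R1 R2 R3 R4 by simp
    show ?thesis unfolding LL RR using C .
  qed
  have "(L / 2) powr (1/p) \<le> (c powr p * (Rf / 2)) powr (1/p)"
  proof (rule powr_mono2)
    show "L / 2 \<le> c powr p * (Rf / 2)" using key Rgf mult_left_mono[OF Rgf, of "c powr p"] by simp
  qed (use assms L0 in auto)
  also have "\<dots> = (c powr p) powr (1/p) * (Rf / 2) powr (1/p)"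
    using Rg0 Rgf by (intro powr_mult; auto)
  also have "(c powr p) powr (1/p) = c" using c0 assms(2) by (simp add: powr_powr)
  finally show ?thesis unfolding varM varf c_def .
qed


end
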